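(* Suppose $(X_A,\sigma_A)$ and $(X_B,\sigma_B)$ are continuously orbit equivalent via a homeomorphism $h:X_A\to X_B$ with continuous $k_1,l_1:X_A\to\mathbb Z_+$ and $k_2,l_2:X_B\to\mathbb Z_+$ as in the context. Then for all $m\in\mathbb Z_+$, $f\in C(X_B,\mathbb Z)$ and $g\in C(X_A,\mathbb Z)$: (i) for all $x\in X_A$, $\Psi_h(f)^m(x)=f^{l_1^m(x)}(h(x))-f^{k_1^m(x)}(h(\sigma_A^m(x)))$, and $g^m(x)=\Psi_{h^{-1}}(g)^{l_1^m(x)}(h(x))-\Psi_{h^{-1}}(g)^{k_1^m(x)}(h(\sigma_A^m(x)))$; (ii) for all $y\in X_B$, $\Psi_{h^{-1}}(g)^m(y)=g^{l_2^m(y)}(h^{-1}(y))-g^{k_2^m(y)}(h^{-1}(\sigma_B^m(y)))$, and $f^m(y)=\Psi_h(f)^{l_2^m(y)}(h^{-1}(y))-\Psi_h(f)^{k_2^m(y)}(h^{-1}(\sigma_B^m(y)))$.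
   Context: Let $N,M>1$ and let $A$ ($N\times N$), $B$ ($M\times M$) be irreducible $\{0,1\}$-matrices which are not permutation matrices. $X_A$ is the compact space of sequences $(x_n)_{n\in\mathbb N}$ with $x_n\in\{1,\dots,N\}$, $A(x_n,x_{n+1})=1$, and $\sigma_A((x_n)_n)=(x_{n+1})_n$; similarly $(X_B,\sigma_B)$. $\mathbb Z_+$ denotes the nonnegative integers. For a function $u$ on $X_A$ (resp. $X_B$) and $n\in\mathbb Z_+$, $u^n(x)=\sum_{i=0}^{n-1}u(\sigma_A^i(x))$ (resp. with $\sigma_B$), so $u^0=0$. Continuous orbit equivalence via $h$: $h:X_A\to X_B$ is a homeomorphism and $k_1,l_1:X_A\to\mathbb Z_+$, $k_2,l_2:X_B\to\mathbb Z_+$ are continuous with $\sigma_B^{k_1(x)}(h(\sigma_A(x)))=\sigma_B^{l_1(x)}(h(x))$ for all $x\in X_A$ and $\sigma_A^{k_2(y)}(h^{-1}(\sigma_B(y)))=\sigma_A^{l_2(y)}(h^{-1}(y))$ for all $y\in X_B$. Define $\Psi_h:C(X_B,\mathbb Z)\to C(X_A,\mathbb Z)$ by $\Psi_h(f)(x)=\sum_{i=0}^{l_1(x)-1}f(\sigma_B^i(h(x)))-\sum_{j=0}^{k_1(x)-1}f(\sigma_B^j(h(\sigma_A(x))))$, and $\Psi_{h^{-1}}:C(X_A,\mathbb Z)\to C(X_B,\mathbb Z)$ by $\Psi_{h^{-1}}(g)(y)=\sum_{i=0}^{l_2(y)-1}g(\sigma_A^i(h^{-1}(y)))-\sum_{j=0}^{k_2(y)-1}g(\sigma_A^j(h^{-1}(\sigma_B(y))))$.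 Here $l_1^m,k_1^m$ (resp. $l_2^m,k_2^m$) are the Birkhoff sums of $l_1,k_1$ over $\sigma_A$ (resp. of $l_2,k_2$ over $\sigma_B$). *)

theory Defs
  imports "HOL-Analysis.Analysis"
begin

text \<open>One-sided topological Markov shifts. Points are sequences nat \<Rightarrow> nat,
  carrying the product topology of the discrete space nat (library instance).\<close>

definition shift :: "(nat \<Rightarrow> nat) \<Rightarrow> (nat \<Rightarrow> nat)" where
  "shift x = (\<lambda>n. x (Suc n))"

definition XM :: "nat \<Rightarrow> (nat \<Rightarrow> nat \<Rightarrow> nat) \<Rightarrow> (nat \<Rightarrow> nat) set" where
  "XM N A = {x. (\<forall>n. x n \<in> {1..N}) \<and> (\<forall>n. A (x n) (x (Suc n)) = 1)}"

definition birk :: "('a \<Rightarrow> 'b::comm_monoid_add) \<Rightarrow> ('a \<Rightarrow> 'a) \<Rightarrow> nat \<Rightarrow> 'a \<Rightarrow> 'b" where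
  "birk u T n x = (\<Sum>i<n. u ((T ^^ i) x))"

fun mpow :: "nat \<Rightarrow> (nat \<Rightarrow> nat \<Rightarrow> nat) \<Rightarrow> nat \<Rightarrow> nat \<Rightarrow> nat \<Rightarrow> nat" where
  "mpow N A 0 i j = (if i = j then 1 else 0)"
| "mpow N A (Suc n) i j = (\<Sum>k\<in>{1..N}. mpow N A n i k * A k j)"

definition zero_one_matrix :: "nat \<Rightarrow> (nat \<Rightarrow> nat \<Rightarrow> nat) \<Rightarrow> bool" where
  "zero_one_matrix N A \<longleftrightarrow> (\<forall>i\<in>{1..N}. \<forall>j\<in>{1..N}. A i j \<in> {0,1})"

definition irreducible_matrix :: "nat \<Rightarrow> (nat \<Rightarrow> nat \<Rightarrow> nat) \<Rightarrow> bool" where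
  "irreducible_matrix N A \<longleftrightarrow> (\<forall>i\<in>{1..N}. \<forall>j\<in>{1..N}. \<exists>n>0. mpow N A n i j > 0)"

definition permutation_matrix :: "nat \<Rightarrow> (nat \<Rightarrow> nat \<Rightarrow> nat) \<Rightarrow> bool" where
  "permutation_matrix N A \<longleftrightarrow> (\<exists>p. bij_betw p {1..N} {1..N} \<and>
      (\<forall>i\<in>{1..N}. \<forall>j\<in>{1..N}. A i j = (if p i = j then 1 else 0)))"

text \<open>Psi_h(f)(x) = f^{l1(x)}(h x) - f^{k1(x)}(h(sigma x)); the same definition
  with (h^{-1}, k2, l2) gives Psi_{h^{-1}}.\<close>
definition Psi :: "((nat \<Rightarrow> nat) \<Rightarrow> (nat \<Rightarrow> nat)) \<Rightarrow> ((nat \<Rightarrow> nat) \<Rightarrow> nat) \<Rightarrow> ((nat \<Rightarrow> nat) \<Rightarrow> nat)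
    \<Rightarrow> ((nat \<Rightarrow> nat) \<Rightarrow> int) \<Rightarrow> (nat \<Rightarrow> nat) \<Rightarrow> int" where
  "Psi h k l f x = birk f shift (l x) (h x) - birk f shift (k x) (h (shift x))"

end

theory Submission
  imports Defs
begin


lemma birk_0[simp]: "birk u T 0 x = 0" by (simp add: birk_def)

lemma birk_Suc: "birk u T (Suc m) x = birk u T m x + u ((T ^^ m) x)"
  by (simp add: birk_def)

lemma funpow_comm: "(f ^^ a) ((f ^^ b) z) = (f ^^ b) ((f ^^ a) z)"
  by (metis comp_apply funpow_add add.commute)

lemma birk_add: "birk u T (a + b) z = birk u T a z + birk u T b ((T ^^ a) z)"
proof (induction b)
  case 0 then show ?case by simp
next
  case (Suc b)
  then show ?case by (simp add: birk_Suc[of u T "a+b"] birk_Suc[of u T b] funpow_add funpow_comm add.assoc)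
qed

lemma shift_pow_in: "\<forall>x\<in>S. shift x \<in> S \<Longrightarrow> x \<in> S \<Longrightarrow> (shift ^^ m) x \<in> S"
  by (induction m) auto

lemma orbit_iter:
  assumes inv: "\<forall>x\<in>S. shift x \<in> S"
    and orb: "\<forall>x\<in>S. (shift ^^ k x) (\<phi> (shift x)) = (shift ^^ l x) (\<phi> x)"
    and x: "x \<in> S"
  shows "(shift ^^ birk k shift m x) (\<phi> ((shift ^^ m) x)) = (shift ^^ birk l shift m x) (\<phi> x)"
proof (induction m)
  case 0 then show ?case by simp
next
  case (Suc m)
  define y where "y = (shift ^^ m) x"
  have y: "y \<in> S" unfolding y_def using shift_pow_in[OF inv x] .
  have "(shift ^^ birk k shift (Suc m) x) (\<phi> ((shift ^^ Suc m) x))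
      = (shift ^^ birk k shift m x) ((shift ^^ k y) (\<phi> (shift y)))"
    by (simp add: birk_Suc y_def funpow_add add.commute)
  also have "\<dots> = (shift ^^ birk k shift m x) ((shift ^^ l y) (\<phi> y))"
    using orb y by simp
  also have "\<dots> = (shift ^^ l y) ((shift ^^ birk k shift m x) (\<phi> y))"
    by (rule funpow_comm)
  also have "\<dots> = (shift ^^ l y) ((shift ^^ birk l shift m x) (\<phi> x))"
    using Suc by (simp add: y_def)
  also have "\<dots> = (shift ^^ birk l shift (Suc m) x) (\<phi> x)"
    by (simp add: birk_Suc y_def funpow_add add.commute funpow_comm)
  finally show ?case .
qed

lemma psi_birk:
  assumes inv: "\<forall>x\<in>S. shift x \<in> S"
    and orb: "\<forall>x\<in>S. (shift ^^ k x) (\<phi> (shift x)) = (shift ^^ l x) (\<phi> x)"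
    and x: "x \<in> S"
  shows "birk (Psi \<phi> k l F) shift m x
     = birk F shift (birk l shift m x) (\<phi> x) - birk F shift (birk k shift m x) (\<phi> ((shift ^^ m) x))"
proof (induction m)
  case 0 then show ?case by simp
next
  case (Suc m)
  define y where "y = (shift ^^ m) x"
  have y: "y \<in> S" unfolding y_def using shift_pow_in[OF inv x] .
  define Lm where "Lm = birk l shift m x"
  define Km where "Km = birk k shift m x"
  have it: "(shift ^^ Km) (\<phi> y) = (shift ^^ Lm) (\<phi> x)"
    using orbit_iter[OF inv orb x, of m] by (simp add: Km_def Lm_def y_def)
  have o: "(shift ^^ k y) (\<phi> (shift y)) = (shift ^^ l y) (\<phi> y)" using orb y by simp
  have sy: "(shift ^^ Suc m) x = shift y" by (simp add: y_def)
  have e1: "birk F shift (Lm + l y) (\<phi> x) = birk F shift Lm (\<phi> x) + birk F shift (l y) ((shift ^^ Km) (\<phi> y))"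
    by (simp add: birk_add it)
  have e2: "birk F shift (Km + l y) (\<phi> y) = birk F shift Km (\<phi> y) + birk F shift (l y) ((shift ^^ Km) (\<phi> y))"
    by (simp add: birk_add)
  have e3: "birk F shift (Km + l y) (\<phi> y) = birk F shift (l y) (\<phi> y) + birk F shift Km ((shift ^^ k y) (\<phi> (shift y)))"
    by (simp add: birk_add[of F shift "l y" Km, simplified add.commute] o add.commute)
  have e4: "birk F shift (Km + k y) (\<phi> (shift y)) = birk F shift (k y) (\<phi> (shift y)) + birk F shift Km ((shift ^^ k y) (\<phi> (shift y)))"
    by (simp add: birk_add[of F shift "k y" Km, simplified add.commute] add.commute)
  have "birk (Psi \<phi> k l F) shift (Suc m) x = birk F shift Lm (\<phi> x) - birk F shift Km (\<phi> y) + Psi \<phi> k l F y"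
    using Suc by (simp add: birk_Suc Lm_def Km_def y_def)
  also have "\<dots> = birk F shift (Lm + l y) (\<phi> x) - birk F shift (Km + k y) (\<phi> (shift y))"
    using e1 e2 e3 e4 by (simp add: Psi_def)
  also have "\<dots> = birk F shift (birk l shift (Suc m) x) (\<phi> x) - birk F shift (birk k shift (Suc m) x) (\<phi> ((shift ^^ Suc m) x))"
    by (simp add: birk_Suc Lm_def Km_def y_def)
  finally show ?case .
qed



definition aper :: "(nat \<Rightarrow> nat) \<Rightarrow> bool" where
  "aper x \<longleftrightarrow> (\<forall>i j. (shift ^^ i) x = (shift ^^ j) x \<longrightarrow> i = j)"

lemma aper_diff_aux:
  fixes g :: "(nat \<Rightarrow> nat) \<Rightarrow> int"
  assumes ap: "aper x" and za: "(shift ^^ a) z = (shift ^^ c) x" and zb: "(shift ^^ b) z = (shift ^^ e) x"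
    and ab: "b \<le> a"
  shows "birk g shift c x - birk g shift e x = birk g shift a z - birk g shift b z"
proof -
  obtain t where t: "a = b + t" using ab le_Suc_ex by blast
  have "(shift ^^ (t + e)) x = (shift ^^ t) ((shift ^^ b) z)"
    using zb by (simp add: funpow_add)
  also have "\<dots> = (shift ^^ a) z" by (simp add: t funpow_add funpow_comm)
  finally have "(shift ^^ (t + e)) x = (shift ^^ c) x" using za by simp
  with ap have c: "c = e + t" unfolding aper_def by (metis add.commute)
  show ?thesis using zb by (simp add: c t birk_add)
qed

lemma aper_diff:
  fixes g :: "(nat \<Rightarrow> nat) \<Rightarrow> int"
  assumes ap: "aper x" and za: "(shift ^^ a) z = (shift ^^ c) x" and zb: "(shift ^^ b) z = (shift ^^ e) x"
  shows "birk g shift c x - birk g shift e x = birk g shift a z - birk g shift b z"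
proof (cases "b \<le> a")
  case True then show ?thesis using aper_diff_aux[OF ap za zb] by simp
next
  case False
  then have "a \<le> b" by simp
  then show ?thesis using aper_diff_aux[OF ap zb za, of g] by linarith
qed

lemma psi_inv_aper:
  assumes inv1: "\<forall>x\<in>S1. shift x \<in> S1" and inv2: "\<forall>y\<in>S2. shift y \<in> S2"
    and hS: "\<forall>x\<in>S1. h x \<in> S2" and hh: "\<forall>x\<in>S1. hinv (h x) = x"
    and orb1: "\<forall>x\<in>S1. (shift ^^ k1 x) (h (shift x)) = (shift ^^ l1 x) (h x)"
    and orb2: "\<forall>y\<in>S2. (shift ^^ k2 y) (hinv (shift y)) = (shift ^^ l2 y) (hinv y)"
    and x: "x \<in> S1" and ap: "aper x"
  shows "Psi h k1 l1 (Psi hinv k2 l2 g) x = g x"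
proof -
  have sx: "shift x \<in> S1" using inv1 x by simp
  define y1 where "y1 = h x"
  define y2 where "y2 = h (shift x)"
  have y1: "y1 \<in> S2" and y2: "y2 \<in> S2" using hS x sx by (auto simp: y1_def y2_def)
  have hy1: "hinv y1 = x" and hy2: "hinv y2 = shift x" using hh x sx by (auto simp: y1_def y2_def)
  define w where "w = (shift ^^ l1 x) y1"
  have w2: "(shift ^^ k1 x) y2 = w" using orb1 x by (simp add: w_def y1_def y2_def)
  define z where "z = hinv w"
  define c where "c = birk l2 shift (l1 x) y1"
  define a where "a = birk k2 shift (l1 x) y1"
  define d where "d = birk l2 shift (k1 x) y2"
  define b where "b = birk k2 shift (k1 x) y2"
  have P1: "birk (Psi hinv k2 l2 g) shift (l1 x) y1 = birk g shift c x - birk g shift a z"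
    using psi_birk[OF inv2 orb2 y1] by (simp add: c_def a_def z_def w_def hy1)
  have P2: "birk (Psi hinv k2 l2 g) shift (k1 x) y2 = birk g shift d (shift x) - birk g shift b z"
    using psi_birk[OF inv2 orb2 y2] by (simp add: d_def b_def z_def w2 hy2)
  have za: "(shift ^^ a) z = (shift ^^ c) x"
    using orbit_iter[OF inv2 orb2 y1] by (simp add: c_def a_def z_def w_def hy1)
  have zb: "(shift ^^ b) z = (shift ^^ (Suc d)) x"
    using orbit_iter[OF inv2 orb2 y2, of "k1 x"] by (simp add: d_def b_def z_def w2 hy2 funpow_Suc_right del: funpow.simps)
  have gd: "birk g shift (Suc d) x = g x + birk g shift d (shift x)"
    using birk_add[of g shift 1 d x] by (simp add: birk_def)
  have "Psi h k1 l1 (Psi hinv k2 l2 g) x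
     = (birk g shift c x - birk g shift a z) - (birk g shift d (shift x) - birk g shift b z)"
    by (simp add: Psi_def P1 P2 flip: y1_def y2_def)
  also have "\<dots> = g x" using aper_diff[OF ap za zb, of g] gd by simp
  finally show ?thesis .
qed



lemma shift_cont: "continuous_on UNIV shift"
  unfolding shift_def by (intro continuous_on_coordinatewise_then_product continuous_on_product_coordinates)

lemma shift_pow_cont: "continuous_on UNIV (shift ^^ n)"
  by (induction n) (auto intro: continuous_on_compose2[OF shift_cont])

lemma birk_cont_fixed:
  fixes F :: "(nat \<Rightarrow> nat) \<Rightarrow> int"
  assumes F: "continuous_on S' F" and inv: "\<forall>y\<in>S'. shift y \<in> S'"
  shows "continuous_on S' (birk F shift n)"
proof -
  have "continuous_on S' (\<lambda>y. F ((shift ^^ i) y))" for i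
    using continuous_on_compose2[OF F continuous_on_subset[OF shift_pow_cont[of i]]]
      shift_pow_in[OF inv] by auto
  then show ?thesis unfolding birk_def by (intro continuous_on_sum) auto
qed

lemma cont_index:
  fixes G :: "nat \<Rightarrow> (nat \<Rightarrow> nat) \<Rightarrow> int" and L :: "(nat \<Rightarrow> nat) \<Rightarrow> nat"
  assumes G: "\<And>n. continuous_on S (G n)" and L: "continuous_on S L"
  shows "continuous_on S (\<lambda>x. G (L x) x)"
unfolding continuous_on_def
proof
  fix a assume a: "a \<in> S"
  have "(L \<longlongrightarrow> L a) (at a within S)"
    using L a unfolding continuous_on_def by auto
  then have ev: "eventually (\<lambda>x. L x = L a) (at a within S)"
    by (simp add: tendsto_discrete)
  have "(G (L a) \<longlongrightarrow> G (L a) a) (at a within S)"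
    using G[of "L a"] a unfolding continuous_on_def by auto
  then show "((\<lambda>x. G (L x) x) \<longlongrightarrow> G (L a) a) (at a within S)"
    by (rule Lim_transform_eventually) (use ev in \<open>auto elim: eventually_mono\<close>)
qed

lemma birk_comp_cont:
  fixes F :: "(nat \<Rightarrow> nat) \<Rightarrow> int" and L :: "(nat \<Rightarrow> nat) \<Rightarrow> nat"
  assumes L: "continuous_on S L" and phi: "continuous_on S \<phi>" and phiS: "\<forall>x\<in>S. \<phi> x \<in> S'"
    and F: "continuous_on S' F" and inv: "\<forall>y\<in>S'. shift y \<in> S'"
  shows "continuous_on S (\<lambda>x. birk F shift (L x) (\<phi> x))"
proof (rule cont_index[OF _ L])
  fix n
  show "continuous_on S (\<lambda>x. birk F shift n (\<phi> x))"
    using continuous_on_compose2[OF birk_cont_fixed[OF F inv, of n] phi] phiS by auto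
qed

lemma cont_discrete2:
  fixes f :: "'a::topological_space \<Rightarrow> 'b::discrete_topology" and g :: "'a \<Rightarrow> 'c::discrete_topology"
    and H :: "'b \<Rightarrow> 'c \<Rightarrow> 'd::topological_space"
  assumes f: "continuous_on S f" and g: "continuous_on S g"
  shows "continuous_on S (\<lambda>x. H (f x) (g x))"
  unfolding continuous_on_def
proof
  fix a assume a: "a \<in> S"
  have "eventually (\<lambda>x. f x = f a) (at a within S)"
    using f a unfolding continuous_on_def by (auto simp: tendsto_discrete)
  moreover have "eventually (\<lambda>x. g x = g a) (at a within S)"
    using g a unfolding continuous_on_def by (auto simp: tendsto_discrete)
  ultimately have "eventually (\<lambda>x. H (f x) (g x) = H (f a) (g a)) (at a within S)"
    by (auto elim: eventually_elim2)
  then show "((\<lambda>x. H (f x) (g x)) \<longlongrightarrow> H (f a) (g a)) (at a within S)"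
    by (rule tendsto_eventually)
qed

lemma psi_cont:
  fixes F :: "(nat \<Rightarrow> nat) \<Rightarrow> int"
  assumes k: "continuous_on S k" and l: "continuous_on S l" and phi: "continuous_on S \<phi>"
    and phiS: "\<forall>x\<in>S. \<phi> x \<in> S'" and invS: "\<forall>x\<in>S. shift x \<in> S"
    and F: "continuous_on S' F" and inv: "\<forall>y\<in>S'. shift y \<in> S'"
  shows "continuous_on S (Psi \<phi> k l F)"
proof -
  have c2: "continuous_on S (\<lambda>x. \<phi> (shift x))"
    using continuous_on_compose2[OF phi continuous_on_subset[OF shift_cont]] invS by auto
  have "continuous_on S (\<lambda>x. birk F shift (l x) (\<phi> x) - birk F shift (k x) (\<phi> (shift x)))"
  proof (rule cont_discrete2[where H="(-)"])
    show "continuous_on S (\<lambda>x. birk F shift (l x) (\<phi> x))"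
      by (rule birk_comp_cont[OF l phi phiS F inv])
    show "continuous_on S (\<lambda>x. birk F shift (k x) (\<phi> (shift x)))"
      by (rule birk_comp_cont[OF k c2 _ F inv]) (use phiS invS in auto)
  qed
  then show ?thesis unfolding Psi_def[abs_def] .
qed



definition apath :: "nat \<Rightarrow> (nat \<Rightarrow> nat \<Rightarrow> nat) \<Rightarrow> nat \<Rightarrow> (nat \<Rightarrow> nat) \<Rightarrow> nat \<Rightarrow> nat \<Rightarrow> bool" where
  "apath N A n p i j \<longleftrightarrow> p 0 = i \<and> p n = j \<and> (\<forall>t\<le>n. p t \<in> {1..N}) \<and> (\<forall>t<n. A (p t) (p (Suc t)) = 1)"

lemma mpow_path:
  assumes z: "zero_one_matrix N A"
  shows "mpow N A n i j > 0 \<Longrightarrow> 0 < n \<Longrightarrow> j \<in> {1..N} \<Longrightarrow> \<exists>p. apath N A n p i j"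
proof (induction n arbitrary: j)
  case 0 then show ?case by simp
next
  case (Suc n)
  have "0 < (\<Sum>k\<in>{1..N}. mpow N A n i k * A k j)"
    using Suc.prems(1) by (simp only: mpow.simps(2))
  then have ne: "(\<Sum>k\<in>{1..N}. mpow N A n i k * A k j) \<noteq> 0"
    by (rule gr_implies_not0)
  obtain k where k: "k \<in> {1..N}" "mpow N A n i k * A k j \<noteq> 0"
    using sum.not_neutral_contains_not_neutral[OF ne] by blast
  have "A k j \<in> {0,1}" using z k(1) Suc.prems(3) unfolding zero_one_matrix_def by blast
  with k(2) have Akj: "A k j = 1" by auto
  have mk: "mpow N A n i k \<noteq> 0" using k(2) by auto
  show ?case
  proof (cases n)
    case 0
    with mk have ki: "k = i" by (auto split: if_splits)
    have "apath N A (Suc 0) (\<lambda>t. if t = 0 then i else j) i j"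
      unfolding apath_def using ki k(1) Akj Suc.prems(3) by (auto simp: le_Suc_eq)
    then show ?thesis using 0 by blast
  next
    case (Suc n')
    have mk': "mpow N A n i k > 0" using mk by simp
    obtain p where p: "apath N A n p i k" using Suc.IH[OF mk' _ k(1)] Suc by blast
    have "apath N A (Suc n) (p(Suc n := j)) i j"
      unfolding apath_def
    proof (intro conjI allI impI)
      show "(p(Suc n := j)) 0 = i" using p unfolding apath_def by simp
      show "(p(Suc n := j)) (Suc n) = j" by simp
      fix t
      show "t \<le> Suc n \<Longrightarrow> (p(Suc n := j)) t \<in> {1..N}"
        using p Suc.prems(3) unfolding apath_def by (cases "t = Suc n") auto
      show "t < Suc n \<Longrightarrow> A ((p(Suc n := j)) t) ((p(Suc n := j)) (Suc t)) = 1"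
        using p Akj unfolding apath_def by (cases "t = n") auto
    qed
    then show ?thesis by blast
  qed
qed

lemma irr_path:
  assumes z: "zero_one_matrix N A" and irr: "irreducible_matrix N A" and i: "i \<in> {1..N}" and j: "j \<in> {1..N}"
  shows "\<exists>n>0. \<exists>p. apath N A n p i j"
proof -
  obtain n where "n > 0" "mpow N A n i j > 0" using irr i j unfolding irreducible_matrix_def by blast
  then show ?thesis using mpow_path[OF z _ _ j] by blast
qed



lemma branch:
  assumes z: "zero_one_matrix N A" and irr: "irreducible_matrix N A" and np: "\<not> permutation_matrix N A"
  shows "\<exists>v u1 u2. v \<in> {1..N} \<and> u1 \<in> {1..N} \<and> u2 \<in> {1..N} \<and> u1 \<noteq> u2 \<and> A v u1 = 1 \<and> A v u2 = 1"
proof (rule ccontr)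
  assume nb: "\<not> ?thesis"
  have ex: "\<exists>u\<in>{1..N}. A v u = 1" if v: "v \<in> {1..N}" for v
  proof -
    obtain n p where "n > 0" "apath N A n p v v" using irr_path[OF z irr v v] by auto
    then show ?thesis unfolding apath_def by (metis le_simps(3) less_eq_Suc_le)
  qed
  define q where "q v = (SOME u. u \<in> {1..N} \<and> A v u = 1)" for v
  have q: "q v \<in> {1..N} \<and> A v (q v) = 1" if "v \<in> {1..N}" for v
    using someI_ex[OF ex[OF that, unfolded Bex_def]] unfolding q_def by blast
  have Aq: "A v j = (if q v = j then 1 else 0)" if "v \<in> {1..N}" "j \<in> {1..N}" for v j
  proof (cases "A v j = 1")
    case True
    have "q v = j"
    proof (rule ccontr)
      assume "q v \<noteq> j"
      then show False using nb q[OF that(1)] that True by blast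
    qed
    then show ?thesis using True by simp
  next
    case False then have "A v j = 0" using z that unfolding zero_one_matrix_def by force
    moreover have "q v \<noteq> j" using q[OF that(1)] \<open>A v j = 0\<close> by force
    ultimately show ?thesis by simp
  qed
  have surj: "q ` {1..N} = {1..N}"
  proof
    show "q ` {1..N} \<subseteq> {1..N}" using q by auto
    show "{1..N} \<subseteq> q ` {1..N}"
    proof
      fix j assume j: "j \<in> {1..N}"
      obtain n p where n: "n > 0" and p: "apath N A n p j j" using irr_path[OF z irr j j] by auto
      obtain n' where n': "n = Suc n'" using n gr0_implies_Suc by auto
      have "p n' \<in> {1..N}" "A (p n') j = 1" using p unfolding apath_def n' by auto
      have "q (p n') = j"
      proof (rule ccontr)
        assume "q (p n') \<noteq> j"
        then show False using nb q[of "p n'"] j \<open>p n' \<in> {1..N}\<close> \<open>A (p n') j = 1\<close> by blast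
      qed
      then show "j \<in> q ` {1..N}" using \<open>p n' \<in> {1..N}\<close> by (metis image_eqI)
    qed
  qed
  then have b: "bij_betw q {1..N} {1..N}"
    unfolding bij_betw_def using eq_card_imp_inj_on[of "{1..N}" q] by simp
  have a: "\<forall>i\<in>{1..N}. \<forall>j\<in>{1..N}. A i j = (if q i = j then 1 else 0)"
    by (intro ballI) (rule Aq)
  have "permutation_matrix N A"
    unfolding permutation_matrix_def
  proof (intro exI[of _ q] conjI)
    show "bij_betw q {1..N} {1..N}" by (rule b)
    show "\<forall>i\<in>{1..N}. \<forall>j\<in>{1..N}. A i j = (if q i = j then 1 else 0)" by (rule a)
  qed
  with np show False by contradiction
qed



lemma shift_pow_eq: "(shift ^^ i) x = (\<lambda>t. x (t + i))"
  by (induction i arbitrary: x) (auto simp: shift_def)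

lemma uncountable_bool_fun: "\<not> countable (UNIV :: (nat \<Rightarrow> bool) set)"
proof
  assume c: "countable (UNIV :: (nat \<Rightarrow> bool) set)"
  define f where "f = from_nat_into (UNIV :: (nat \<Rightarrow> bool) set)"
  have r: "range f = UNIV" unfolding f_def using range_from_nat_into[OF _ c] by simp
  obtain k where "f k = (\<lambda>n. \<not> f n n)" using r by (metis UNIV_I imageE)
  then have "f k k = (\<not> f k k)" by (metis)
  then show False by simp
qed

lemma evper:
  fixes x :: "nat \<Rightarrow> nat" and i p t :: nat
  assumes e: "\<forall>t. x (t + i) = x (t + i + p)" and p: "p > 0"
  shows "t \<ge> i \<Longrightarrow> x t = x (i + (t - i) mod p)"
proof (induction t rule: less_induct)
  case (less t)
  show ?case
  proof (cases "t < i + p")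
    case True
    then have "(t - i) mod p = t - i" using less.prems by (intro mod_less) linarith
    then show ?thesis using less.prems by simp
  next
    case False
    have h1: "t - p - i + i = t - p" "t - p - i + i + p = t" "t - p + p = t" using False by auto
    have "x (t - p) = x t" using e[rule_format, of "t - p - i"] by (simp only: h1)
    then have "x t = x (t - p)" by simp
    also have "\<dots> = x (i + (t - p - i) mod p)" using less.IH[of "t - p"] False p by simp
    also have "(t - p - i) mod p = (t - i) mod p"
    proof -
      have "t - i = (t - p - i) + p" using False by simp
      then show ?thesis by simp
    qed
    finally show ?thesis .
  qed
qed

definition decode :: "nat \<times> nat \<times> nat list \<Rightarrow> nat \<Rightarrow> nat" where
  "decode z t = (case z of (i, p, xs) \<Rightarrow> xs ! (if t < i then t else i + (t - i) mod p))"

lemma not_aper_countable: "countable {x. \<not> aper x}"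
proof -
  have "{x. \<not> aper x} \<subseteq> range decode"
  proof
    fix x assume "x \<in> {x. \<not> aper x}"
    then obtain i j where ij: "(shift ^^ i) x = (shift ^^ j) x" "i \<noteq> j" unfolding aper_def by auto
    obtain i' j' where ij': "(shift ^^ i') x = (shift ^^ j') x" "i' < j'"
    proof (cases "i < j")
      case True then show ?thesis using ij that by blast
    next
      case False then have "j < i" using ij(2) by simp
      then show ?thesis using ij(1)[symmetric] that by blast
    qed
    define p where "p = j' - i'"
    have p: "p > 0" using ij' by (simp add: p_def)
    have e: "\<forall>t. x (t + i') = x (t + i' + p)"
    proof
      fix t
      have "x (t + i') = x (t + j')" using fun_cong[OF ij'(1), of t] by (simp add: shift_pow_eq)
      then show "x (t + i') = x (t + i' + p)" using ij' by (simp add: p_def)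
    qed
    have "x = decode (i', p, map x [0..<i' + p])"
    proof
      fix t
      show "x t = decode (i', p, map x [0..<i' + p]) t"
      proof (cases "t < i'")
        case True then show ?thesis by (simp add: decode_def)
      next
        case False
        have lt: "i' + (t - i') mod p < i' + p" using p by simp
        have "map x [0..<i' + p] ! (i' + (t - i') mod p) = x (i' + (t - i') mod p)"
          using lt by (simp del: upt_Suc)
        then show ?thesis using False evper[OF e p, of t]
          by (simp add: decode_def del: upt_Suc)
      qed
    qed
    then show "x \<in> range decode" by blast
  qed
  moreover have "countable (range decode)" by simp
  ultimately show ?thesis by (rule countable_subset)
qed



lemma prepend_XM:
  assumes p: "apath N A m r i j" and z: "z \<in> XM N A" and z0: "z 0 = j"
  shows "(\<lambda>t. if t < m then r t else z (t - m)) \<in> XM N A"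
  unfolding XM_def
proof (intro CollectI conjI allI)
  fix t
  show "(if t < m then r t else z (t - m)) \<in> {1..N}"
    using p z unfolding apath_def XM_def by auto
  show "A (if t < m then r t else z (t - m)) (if Suc t < m then r (Suc t) else z (Suc t - m)) = 1"
  proof (cases "Suc t < m")
    case True then show ?thesis using p unfolding apath_def by auto
  next
    case False
    show ?thesis
    proof (cases "Suc t = m")
      case True
      then have "A (r t) (r (Suc t)) = 1" using p unfolding apath_def by auto
      then show ?thesis using True p z0 unfolding apath_def by auto
    next
      case False2: False
      then have "Suc t - m = Suc (t - m)" "\<not> t < m" using False by auto
      then show ?thesis using z False unfolding XM_def by auto
    qed
  qed
qed

lemma loop_path:
  assumes "A v u = 1" "v \<in> {1..N}" "apath N A n p u v"
  shows "apath N A (Suc n) (\<lambda>t. if t = 0 then v else p (t - 1)) v v"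
  unfolding apath_def
proof (intro conjI allI impI)
  fix t
  show "t \<le> Suc n \<Longrightarrow> (if t = 0 then v else p (t - 1)) \<in> {1..N}"
    using assms unfolding apath_def by (cases t) auto
  show "t < Suc n \<Longrightarrow> A (if t = 0 then v else p (t - 1)) (if Suc t = 0 then v else p (Suc t - 1)) = 1"
    using assms unfolding apath_def by (cases t) auto
qed (use assms in \<open>auto simp: apath_def\<close>)

lemma periodic:
  assumes c: "apath N A P c v v" and P: "P > 0"
  shows "c (t mod P) \<in> {1..N} \<and> A (c (t mod P)) (c (Suc t mod P)) = 1"
proof -
  have lt: "t mod P < P" using P by simp
  have in1: "c (t mod P) \<in> {1..N}" using c lt unfolding apath_def by auto
  show ?thesis
  proof (cases "Suc (t mod P) = P")
    case True
    then have "Suc t mod P = 0" by (simp add: mod_Suc)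
    moreover have "A (c (t mod P)) (c P) = 1" using c lt True unfolding apath_def by (metis lessI)
    ultimately show ?thesis using in1 c unfolding apath_def by auto
  next
    case False
    then have "Suc t mod P = Suc (t mod P)" by (simp add: mod_Suc)
    moreover have "Suc (t mod P) < P" using False lt by simp
    ultimately show ?thesis using in1 c unfolding apath_def by auto
  qed
qed



lemma dense_aper:
  assumes z: "zero_one_matrix N A" and irr: "irreducible_matrix N A" and np: "\<not> permutation_matrix N A"
    and a: "a \<in> XM N A"
  shows "\<exists>u\<in>XM N A. aper u \<and> (\<forall>i<n. u i = a i)"
proof -
  obtain v u1 u2 where v: "v \<in> {1..N}" and u1: "u1 \<in> {1..N}" and u2: "u2 \<in> {1..N}" and u12: "u1 \<noteq> u2"
    and Av1: "A v u1 = 1" and Av2: "A v u2 = 1"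
    using branch[OF z irr np] by blast
  obtain n1 p1 where n1: "n1 > 0" and p1: "apath N A n1 p1 u1 v" using irr_path[OF z irr u1 v] by blast
  obtain n2 p2 where p2: "apath N A n2 p2 u2 v" using irr_path[OF z irr u2 v] by blast
  define c1 where "c1 = (\<lambda>t. if t = 0 then v else p1 (t - 1))"
  define c2 where "c2 = (\<lambda>t. if t = 0 then v else p2 (t - 1))"
  define P1 where "P1 = Suc n1"
  define P2 where "P2 = Suc n2"
  have c1: "apath N A P1 c1 v v" unfolding c1_def P1_def by (rule loop_path[OF Av1 v p1])
  have c2: "apath N A P2 c2 v v" unfolding c2_def P2_def by (rule loop_path[OF Av2 v p2])
  have P1p: "P1 > 0" and P2p: "P2 > 0" unfolding P1_def P2_def by simp_all
  have P12: "P1 \<ge> 2" using n1 by (simp add: P1_def)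
  define Q where "Q = P1 * P2"
  have "P1 * 1 \<le> P1 * P2" using P2p by (intro mult_le_mono2) simp
  then have Q2: "Q \<ge> 2" unfolding Q_def using P12 by linarith
  define \<alpha> where "\<alpha> t = c1 (t mod P1)" for t
  define \<beta> where "\<beta> t = c2 (t mod P2)" for t
  have \<alpha>: "\<alpha> t \<in> {1..N} \<and> A (\<alpha> t) (\<alpha> (Suc t)) = 1" for t
    unfolding \<alpha>_def using periodic[OF c1 P1p] .
  have \<beta>: "\<beta> t \<in> {1..N} \<and> A (\<beta> t) (\<beta> (Suc t)) = 1" for t
    unfolding \<beta>_def using periodic[OF c2 P2p] .
  have bd: "\<alpha> t = v \<and> \<beta> t = v" if "t mod Q = 0" for t
  proof -
    have "Q dvd t" using that by auto
    then have "P1 dvd t" "P2 dvd t" unfolding Q_def using dvd_mult_left dvd_mult_right by blast+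
    then have "t mod P1 = 0" "t mod P2 = 0" by auto
    then show ?thesis using c1 c2 unfolding \<alpha>_def \<beta>_def apath_def by auto
  qed
  have at1: "\<alpha> (k * Q + 1) = u1 \<and> \<beta> (k * Q + 1) = u2" for k
  proof -
    have q1: "k * Q + 1 = 1 + (k * P2) * P1" "k * Q + 1 = 1 + (k * P1) * P2"
      unfolding Q_def by (simp_all add: algebra_simps)
    have e1': "(k * Q + 1) mod P1 = 1 mod P1" unfolding q1(1) by (rule mod_mult_self1)
    have e1: "(k * Q + 1) mod P1 = 1" using P12 e1' by simp
    have e2: "(k * Q + 1) mod P2 = 1 mod P2" unfolding q1(2) by (rule mod_mult_self1)
    show ?thesis
    proof (cases "P2 = 1")
      case True
      then have "n2 = 0" by (simp add: P2_def)
      then have "u2 = v" using p2 unfolding apath_def by simp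
      then show ?thesis using e1 e2 True p1 unfolding \<alpha>_def \<beta>_def c1_def c2_def apath_def by simp
    next
      case False
      then have "1 mod P2 = 1" using P2p by simp
      then show ?thesis using e1 e2 p1 p2 unfolding \<alpha>_def \<beta>_def c1_def c2_def apath_def by simp
    qed
  qed
  have divk: "(k * Q + 1) div Q = k" for k
  proof -
    have "(1 + k * Q) div Q = k + 1 div Q" using Q2 by (intro div_mult_self1) simp
    then show ?thesis using Q2 by (simp add: add.commute)
  qed
  define \<Phi> where "\<Phi> s t = (if s (t div Q) then \<alpha> t else \<beta> t)" for s :: "nat \<Rightarrow> bool" and t
  have \<Phi>XM: "\<Phi> s \<in> XM N A" for s
    unfolding XM_def
  proof (intro CollectI conjI allI)
    fix t
    show "\<Phi> s t \<in> {1..N}" using \<alpha> \<beta> unfolding \<Phi>_def by auto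
    show "A (\<Phi> s t) (\<Phi> s (Suc t)) = 1"
    proof (cases "Suc t mod Q = 0")
      case True
      then have "\<alpha> (Suc t) = v" "\<beta> (Suc t) = v" using bd by auto
      then show ?thesis using \<alpha>[of t] \<beta>[of t] unfolding \<Phi>_def by auto
    next
      case False
      then have "Suc t div Q = t div Q" by (simp add: div_Suc)
      then show ?thesis using \<alpha>[of t] \<beta>[of t] unfolding \<Phi>_def by auto
    qed
  qed
  have \<Phi>0: "\<Phi> s 0 = v" for s using bd[of 0] unfolding \<Phi>_def by auto
  have \<Phi>inj: "s = s'" if "\<Phi> s = \<Phi> s'" for s s'
  proof
    fix k
    have "\<Phi> s (k * Q + 1) = \<Phi> s' (k * Q + 1)" using that by simp
    then show "s k = s' k" using at1[of k] u12 unfolding \<Phi>_def divk by (auto split: if_splits)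
  qed
  have an: "a n \<in> {1..N}" using a unfolding XM_def by auto
  obtain m0 r where r: "apath N A m0 r (a n) v" using irr_path[OF z irr an v] by blast
  have pa: "apath N A n a (a 0) (a n)" using a unfolding XM_def apath_def by auto
  define \<Psi> where "\<Psi> s = (\<lambda>t. if t < n then a t else (\<lambda>t. if t < m0 then r t else \<Phi> s (t - m0)) (t - n))" for s
  have \<Psi>XM: "\<Psi> s \<in> XM N A" for s
  proof -
    have 1: "(\<lambda>t. if t < m0 then r t else \<Phi> s (t - m0)) \<in> XM N A"
      by (rule prepend_XM[OF r \<Phi>XM \<Phi>0])
    have 2: "(\<lambda>t. if t < m0 then r t else \<Phi> s (t - m0)) 0 = a n"
      using r \<Phi>0 unfolding apath_def by auto
    show ?thesis unfolding \<Psi>_def by (rule prepend_XM[OF pa 1 2])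
  qed
  have \<Psi>inj: "inj \<Psi>"
  proof (rule injI)
    fix s s' assume e: "\<Psi> s = \<Psi> s'"
    have "\<Phi> s = \<Phi> s'"
    proof
      fix t
      have "\<Psi> s (t + m0 + n) = \<Psi> s' (t + m0 + n)" using e by simp
      then show "\<Phi> s t = \<Phi> s' t" unfolding \<Psi>_def by simp
    qed
    then show "s = s'" by (rule \<Phi>inj)
  qed
  have "\<exists>s. aper (\<Psi> s)"
  proof (rule ccontr)
    assume "\<not> (\<exists>s. aper (\<Psi> s))"
    then have "range \<Psi> \<subseteq> {x. \<not> aper x}" by auto
    then have "countable (range \<Psi>)" using not_aper_countable countable_subset by blast
    then have "countable (UNIV :: (nat \<Rightarrow> bool) set)"
      using countable_image_inj_on[OF _ \<Psi>inj] by blast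
    then show False using uncountable_bool_fun by blast
  qed
  then obtain s where "aper (\<Psi> s)" by blast
  moreover have "\<forall>i<n. \<Psi> s i = a i" unfolding \<Psi>_def by simp
  ultimately show ?thesis using \<Psi>XM by blast
qed



lemma fun_tendsto_iff:
  fixes u :: "nat \<Rightarrow> nat \<Rightarrow> 'b::topological_space"
  shows "(u \<longlonglongrightarrow> l) \<longleftrightarrow> (\<forall>i. (\<lambda>n. u n i) \<longlonglongrightarrow> l i)"
proof -
  have "(u \<longlonglongrightarrow> l) \<longleftrightarrow> limitin (product_topology (\<lambda>_. euclidean) UNIV) u l sequentially"
    by (simp add: euclidean_product_topology)
  also have "\<dots> \<longleftrightarrow> (\<forall>i. (\<lambda>n. u n i) \<longlonglongrightarrow> l i)"
    by (simp add: limitin_componentwise)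
  finally show ?thesis .
qed

lemma XM_shift: "x \<in> XM N A \<Longrightarrow> shift x \<in> XM N A"
  unfolding XM_def shift_def by auto

lemma approx_aper:
  assumes z: "zero_one_matrix N A" and irr: "irreducible_matrix N A" and np: "\<not> permutation_matrix N A"
    and a: "a \<in> XM N A"
  shows "\<exists>u. (\<forall>n. u n \<in> XM N A \<and> aper (u n)) \<and> u \<longlonglongrightarrow> a"
proof -
  have "\<forall>n. \<exists>w. w \<in> XM N A \<and> aper w \<and> (\<forall>i<n. w i = a i)"
    using dense_aper[OF z irr np a] by blast
  then obtain u where u: "\<And>n. u n \<in> XM N A \<and> aper (u n) \<and> (\<forall>i<n. u n i = a i)" by metis
  have "u \<longlonglongrightarrow> a" unfolding fun_tendsto_iff
  proof
    fix i
    have "eventually (\<lambda>n. u n i = a i) sequentially"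
      unfolding eventually_sequentially using u by (intro exI[of _ "Suc i"]) auto
    then show "(\<lambda>n. u n i) \<longlonglongrightarrow> a i" by (rule tendsto_eventually)
  qed
  then show ?thesis using u by blast
qed

lemma psi_inv_all:
  fixes g :: "(nat \<Rightarrow> nat) \<Rightarrow> int"
  assumes z: "zero_one_matrix N A" and irr: "irreducible_matrix N A" and np: "\<not> permutation_matrix N A"
    and inv2: "\<forall>y\<in>S2. shift y \<in> S2"
    and hS: "\<forall>x\<in>XM N A. h x \<in> S2" and hh: "\<forall>x\<in>XM N A. hinv (h x) = x"
    and hinvS: "\<forall>y\<in>S2. hinv y \<in> XM N A"
    and hc: "continuous_on (XM N A) h" and hinvc: "continuous_on S2 hinv"
    and k1: "continuous_on (XM N A) k1" and l1: "continuous_on (XM N A) l1"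
    and k2: "continuous_on S2 k2" and l2: "continuous_on S2 l2"
    and orb1: "\<forall>x\<in>XM N A. (shift ^^ k1 x) (h (shift x)) = (shift ^^ l1 x) (h x)"
    and orb2: "\<forall>y\<in>S2. (shift ^^ k2 y) (hinv (shift y)) = (shift ^^ l2 y) (hinv y)"
    and g: "continuous_on (XM N A) g"
    and x: "x \<in> XM N A"
  shows "Psi h k1 l1 (Psi hinv k2 l2 g) x = g x"
proof -
  let ?S1 = "XM N A"
  have inv1: "\<forall>x\<in>?S1. shift x \<in> ?S1" using XM_shift by blast
  have cP: "continuous_on S2 (Psi hinv k2 l2 g)"
    by (rule psi_cont[OF k2 l2 hinvc hinvS inv2 g inv1])
  have cQ: "continuous_on ?S1 (Psi h k1 l1 (Psi hinv k2 l2 g))"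
    by (rule psi_cont[OF k1 l1 hc hS inv1 cP inv2])
  define D where "D y = Psi h k1 l1 (Psi hinv k2 l2 g) y - g y" for y
  have cD: "continuous_on ?S1 D" unfolding D_def
    by (rule cont_discrete2[OF cQ g, where H="(-)"])
  have D0: "D y = 0" if "y \<in> ?S1" "aper y" for y
    unfolding D_def using psi_inv_aper[OF inv1 inv2 hS hh orb1 orb2 that] by simp
  have "D x = 0"
  proof (cases "aper x")
    case True then show ?thesis using D0 x by blast
  next
    case False
    have "(D \<longlongrightarrow> D x) (at x within ?S1)" using cD x unfolding continuous_on_def by blast
    then have "eventually (\<lambda>y. D y = D x) (at x within ?S1)" by (simp add: tendsto_discrete)
    then obtain U where U: "open U" "x \<in> U" "\<forall>y\<in>U. y \<noteq> x \<longrightarrow> y \<in> ?S1 \<longrightarrow> D y = D x"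
      unfolding eventually_at_topological by blast
    obtain u where u: "\<forall>n. u n \<in> ?S1 \<and> aper (u n)" and ux: "u \<longlonglongrightarrow> x"
      using approx_aper[OF z irr np x] by blast
    have "eventually (\<lambda>n. u n \<in> U) sequentially" using topological_tendstoD[OF ux U(1,2)] .
    then obtain n where n: "u n \<in> U" by (meson eventually_sequentially order_refl)
    have "u n \<noteq> x" using u False by metis
    then have "D (u n) = D x" using U(3) n u by blast
    then show ?thesis using D0 u by metis
  qed
  then show ?thesis unfolding D_def by simp
qed

theorem lemma4p5:
  fixes N M :: nat and A B :: "nat \<Rightarrow> nat \<Rightarrow> nat"
    and h hinv :: "(nat \<Rightarrow> nat) \<Rightarrow> (nat \<Rightarrow> nat)"
    and k1 l1 k2 l2 :: "(nat \<Rightarrow> nat) \<Rightarrow> nat"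
    and m :: nat and f g :: "(nat \<Rightarrow> nat) \<Rightarrow> int"
  assumes "N > 1" and "M > 1"
    and "zero_one_matrix N A" and "irreducible_matrix N A" and "\<not> permutation_matrix N A"
    and "zero_one_matrix M B" and "irreducible_matrix M B" and "\<not> permutation_matrix M B"
    and hom: "homeomorphism (XM N A) (XM M B) h hinv"
    and "continuous_on (XM N A) k1" and "continuous_on (XM N A) l1"
    and "continuous_on (XM M B) k2" and "continuous_on (XM M B) l2"
    and orb1: "\<forall>x\<in>XM N A. (shift ^^ k1 x) (h (shift x)) = (shift ^^ l1 x) (h x)"
    and orb2: "\<forall>y\<in>XM M B. (shift ^^ k2 y) (hinv (shift y)) = (shift ^^ l2 y) (hinv y)"
    and f: "continuous_on (XM M B) f"
    and g: "continuous_on (XM N A) g"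
  shows "(\<forall>x\<in>XM N A.
            birk (Psi h k1 l1 f) shift m x
              = birk f shift (birk l1 shift m x) (h x)
                - birk f shift (birk k1 shift m x) (h ((shift ^^ m) x))
          \<and> birk g shift m x
              = birk (Psi hinv k2 l2 g) shift (birk l1 shift m x) (h x)
                - birk (Psi hinv k2 l2 g) shift (birk k1 shift m x) (h ((shift ^^ m) x)))
       \<and> (\<forall>y\<in>XM M B.
            birk (Psi hinv k2 l2 g) shift m y
              = birk g shift (birk l2 shift m y) (hinv y)
                - birk g shift (birk k2 shift m y) (hinv ((shift ^^ m) y))
          \<and> birk f shift m y
              = birk (Psi h k1 l1 f) shift (birk l2 shift m y) (hinv y)
                - birk (Psi h k1 l1 f) shift (birk k2 shift m y) (hinv ((shift ^^ m) y)))"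
proof -
  let ?S1 = "XM N A" and ?S2 = "XM M B"
  have inv1: "\<forall>x\<in>?S1. shift x \<in> ?S1" using XM_shift by blast
  have inv2: "\<forall>x\<in>?S2. shift x \<in> ?S2" using XM_shift by blast
  have hh: "\<forall>x\<in>?S1. hinv (h x) = x" and hS: "\<forall>x\<in>?S1. h x \<in> ?S2" and hc: "continuous_on ?S1 h"
    and hh2: "\<forall>y\<in>?S2. h (hinv y) = y" and hinvS: "\<forall>y\<in>?S2. hinv y \<in> ?S1" and hinvc: "continuous_on ?S2 hinv"
    using hom unfolding homeomorphism_def by auto
  have E1: "Psi h k1 l1 (Psi hinv k2 l2 g) x = g x" if "x \<in> ?S1" for x
    by (rule psi_inv_all[OF assms(3,4,5) inv2 hS hh hinvS hc hinvc assms(10,11,12,13) orb1 orb2 g that])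
  have E2: "Psi hinv k2 l2 (Psi h k1 l1 f) y = f y" if "y \<in> ?S2" for y
    by (rule psi_inv_all[OF assms(6,7,8) inv1 hinvS hh2 hS hinvc hc assms(12,13,10,11) orb2 orb1 f that])
  have B1: "birk g shift m x = birk (Psi h k1 l1 (Psi hinv k2 l2 g)) shift m x" if "x \<in> ?S1" for x
    unfolding birk_def by (rule sum.cong) (use E1 shift_pow_in[OF inv1 that] in auto)
  have B2: "birk f shift m y = birk (Psi hinv k2 l2 (Psi h k1 l1 f)) shift m y" if "y \<in> ?S2" for y
    unfolding birk_def by (rule sum.cong) (use E2 shift_pow_in[OF inv2 that] in auto)
  show ?thesis
  proof (intro conjI ballI)
    fix x assume x: "x \<in> ?S1"
    show "birk (Psi h k1 l1 f) shift m x
              = birk f shift (birk l1 shift m x) (h x)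
                - birk f shift (birk k1 shift m x) (h ((shift ^^ m) x))"
      by (rule psi_birk[OF inv1 orb1 x])
    show "birk g shift m x
              = birk (Psi hinv k2 l2 g) shift (birk l1 shift m x) (h x)
                - birk (Psi hinv k2 l2 g) shift (birk k1 shift m x) (h ((shift ^^ m) x))"
      unfolding B1[OF x] by (rule psi_birk[OF inv1 orb1 x])
  next
    fix y assume y: "y \<in> ?S2"
    show "birk (Psi hinv k2 l2 g) shift m y
              = birk g shift (birk l2 shift m y) (hinv y)
                - birk g shift (birk k2 shift m y) (hinv ((shift ^^ m) y))"
      by (rule psi_birk[OF inv2 orb2 y])
    show "birk f shift m y
              = birk (Psi h k1 l1 f) shift (birk l2 shift m y) (hinv y)
                - birk (Psi h k1 l1 f) shift (birk k2 shift m y) (hinv ((shift ^^ m) y))"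
      unfolding B2[OF y] by (rule psi_birk[OF inv2 orb2 y])
  qed
qed

end
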